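(* Let $m\ge 1$, $k\ge 2$ and $n\ge k-1$. The polynomials $$(x_1\cdots x_n)^m(x_1^{l_1}\cdots x_n^{l_n})^{m+1}(x_1^d+\cdots+x_n^d),$$ where $(d,l_1,\ldots,l_n)$ ranges over all tuples of nonnegative integers with $d+(m+1)(l_1+\cdots+l_n)=(m+1)(k-1)-1$, are linearly independent over $\mathbb{R}$. Hence they form a basis of $W_{m,k}$.
   Context: $W_{m,k}$ denotes the real span of exactly these polynomials. *)

theory Defs
  imports Complex_Main
begin

text \<open>Polynomials in n real variables are represented as polynomial functions
  on points x :: nat => real, using the variables x 0, ..., x (n-1)
  (corresponding to x_1, ..., x_n). Since R is infinite, linear independence
  of polynomial functions coincides with that of the polynomials.\<close>

definition idx :: "nat \<Rightarrow> nat \<Rightarrow> nat \<Rightarrow> (nat \<times> (nat \<Rightarrow> nat)) set" where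
  "idx m k n = {(d, l). (\<forall>i\<ge>n. l i = 0) \<and>
      d + (m + 1) * (\<Sum>i<n. l i) = (m + 1) * (k - 1) - 1}"

definition Wpoly :: "nat \<Rightarrow> nat \<Rightarrow> nat \<times> (nat \<Rightarrow> nat) \<Rightarrow> (nat \<Rightarrow> real) \<Rightarrow> real" where
  "Wpoly m n t x = (\<Prod>i<n. x i) ^ m * (\<Prod>i<n. x i ^ snd t i) ^ (m + 1)
                   * (\<Sum>i<n. x i ^ fst t)"

definition lin_indep_family :: "('i \<Rightarrow> 'a \<Rightarrow> real) \<Rightarrow> 'i set \<Rightarrow> bool" where
  "lin_indep_family f I = (\<forall>S c. finite S \<longrightarrow> S \<subseteq> I \<longrightarrow>
      (\<forall>x. (\<Sum>t\<in>S. c t * f t x) = 0) \<longrightarrow> (\<forall>t\<in>S. c t = 0))"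

end

theory Submission
  imports Defs
begin

lemma univ_zero:
  fixes b :: "nat \<Rightarrow> real"
  assumes fin: "finite K" and z: "\<And>t. (\<Sum>k\<in>K. b k * t ^ k) = 0" and kK: "k \<in> K"
  shows "b k = 0"
proof -
  define N where "N = Max K"
  have sub: "K \<subseteq> {..N}" using fin N_def by (auto intro: Max_ge)
  define c where "c i = (if i \<in> K then b i else 0)" for i
  have "\<forall>t. (\<Sum>i\<le>N. c i * t ^ i) = 0"
  proof
    fix t :: real
    have "(\<Sum>i\<le>N. c i * t ^ i) = (\<Sum>i\<in>{..N}. if i \<in> K then b i * t ^ i else 0)"
      by (rule sum.cong) (auto simp: c_def)
    also have "\<dots> = (\<Sum>i\<in>{..N} \<inter> K. b i * t ^ i)"
      by (simp add: sum.inter_restrict)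
    also have "{..N} \<inter> K = K" using sub by blast
    finally show "(\<Sum>i\<le>N. c i * t ^ i) = 0" using z by simp
  qed
  then have "\<forall>i\<le>N. c i = 0" by (simp add: polyfun_eq_0)
  then show ?thesis using kK sub by (auto simp: c_def)
qed

lemma multi_zero:
  fixes a :: "'a \<Rightarrow> real" and \<epsilon> :: "'a \<Rightarrow> nat \<Rightarrow> nat"
  assumes "finite A" and "\<And>x. (\<Sum>\<alpha>\<in>A. a \<alpha> * (\<Prod>i<n. x i ^ \<epsilon> \<alpha> i)) = 0" and "\<alpha>0 \<in> A"
  shows "(\<Sum>\<alpha>\<in>{\<alpha>\<in>A. \<forall>i<n. \<epsilon> \<alpha> i = \<epsilon> \<alpha>0 i}. a \<alpha>) = 0"
  using assms
proof (induction n arbitrary: A)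
  case 0
  then show ?case by simp
next
  case (Suc n)
  define K where "K = (\<lambda>\<alpha>. \<epsilon> \<alpha> n) ` A"
  define g where "g k x = (\<Sum>\<alpha>\<in>{\<alpha>\<in>A. \<epsilon> \<alpha> n = k}. a \<alpha> * (\<Prod>i<n. x i ^ \<epsilon> \<alpha> i))" for k x
  have finK: "finite K" using Suc.prems(1) K_def by simp
  have decomp: "(\<Sum>\<alpha>\<in>A. a \<alpha> * (\<Prod>i<Suc n. x i ^ \<epsilon> \<alpha> i)) = (\<Sum>k\<in>K. g k x * x n ^ k)" for x
  proof -
    have "(\<Sum>\<alpha>\<in>A. a \<alpha> * (\<Prod>i<Suc n. x i ^ \<epsilon> \<alpha> i))
        = (\<Sum>k\<in>K. \<Sum>\<alpha>\<in>{\<alpha>\<in>A. \<epsilon> \<alpha> n = k}. a \<alpha> * (\<Prod>i<Suc n. x i ^ \<epsilon> \<alpha> i))"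
      unfolding K_def using Suc.prems(1) by (rule sum.image_gen)
    also have "\<dots> = (\<Sum>k\<in>K. g k x * x n ^ k)"
      unfolding g_def sum_distrib_right
      by (intro sum.cong refl) (auto simp: mult_ac)
    finally show ?thesis .
  qed
  have gz: "g k x = 0" if "k \<in> K" for k x
  proof -
    have H: "\<And>t. (\<Sum>k\<in>K. g k x * t ^ k) = 0"
    proof -
      fix t
      have "g k' (x(n := t)) = g k' x" for k'
        unfolding g_def by (intro sum.cong refl arg_cong2[where f="(*)"] prod.cong) auto
      then show "(\<Sum>k\<in>K. g k x * t ^ k) = 0"
        using decomp[of "x(n := t)"] Suc.prems(2)[of "x(n := t)"] by simp
    qed
    show ?thesis using univ_zero[OF finK, of "\<lambda>k. g k x", OF H] that by blast
  qed
  define A' where "A' = {\<alpha>\<in>A. \<epsilon> \<alpha> n = \<epsilon> \<alpha>0 n}"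
  have "(\<Sum>\<alpha>\<in>{\<alpha>\<in>A'. \<forall>i<n. \<epsilon> \<alpha> i = \<epsilon> \<alpha>0 i}. a \<alpha>) = 0"
  proof (rule Suc.IH)
    show "finite A'" using Suc.prems(1) A'_def by simp
    show "\<alpha>0 \<in> A'" using Suc.prems(3) A'_def by simp
    show "(\<Sum>\<alpha>\<in>A'. a \<alpha> * (\<Prod>i<n. x i ^ \<epsilon> \<alpha> i)) = 0" for x
      using gz[of "\<epsilon> \<alpha>0 n" x] Suc.prems(3) unfolding A'_def g_def K_def by auto
  qed
  moreover have "{\<alpha>\<in>A'. \<forall>i<n. \<epsilon> \<alpha> i = \<epsilon> \<alpha>0 i} = {\<alpha>\<in>A. \<forall>i<Suc n. \<epsilon> \<alpha> i = \<epsilon> \<alpha>0 i}"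
    unfolding A'_def using less_Suc_eq by auto
  ultimately show ?case by simp
qed

lemma mod_lemma:
  fixes d m s k :: nat
  assumes "d + (m + 1) * s = (m + 1) * (k - 1) - 1" "k \<ge> 2"
  shows "d mod (m + 1) = m"
proof -
  have "(m + 1) * (k - 1) - 1 = m + (m + 1) * (k - 2)"
  proof -
    obtain j where "k = j + 2" using assms(2) by (metis le_add_diff_inverse2)
    then show ?thesis by (simp add: algebra_simps)
  qed
  then have "(d + (m + 1) * s) mod (m + 1) = (m + (m + 1) * (k - 2)) mod (m + 1)"
    using assms(1) by simp
  moreover have "(d + (m + 1) * s) mod (m + 1) = d mod (m + 1)"
    by (metis mod_mult_self2 mult.commute)
  moreover have "(m + (m + 1) * (k - 2)) mod (m + 1) = m"
    by (metis mod_mult_self2 mult.commute mod_less less_add_one)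
  ultimately show ?thesis by simp
qed

lemma Wpoly_expand:
  fixes n :: nat and x :: "nat \<Rightarrow> real"
  assumes "i < n"
  shows "(\<Prod>j<n. x j ^ (m + (m + 1) * l j + (if j = i then d else 0)))
     = (\<Prod>j<n. x j) ^ m * (\<Prod>j<n. x j ^ l j) ^ (m + 1) * (x i ^ d :: real)"
proof -
  have "(\<Prod>j<n. x j ^ (m + (m + 1) * l j + (if j = i then d else 0)))
      = (\<Prod>j<n. x j ^ m * (x j ^ l j) ^ (m + 1) * (if j = i then x j ^ d else 1))"
    by (intro prod.cong refl) (simp add: power_add power_mult[symmetric] mult_ac)
  also have "\<dots> = (\<Prod>j<n. x j ^ m) * (\<Prod>j<n. (x j ^ l j) ^ (m + 1)) * (\<Prod>j<n. if j = i then x j ^ d else 1)"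
    by (simp add: prod.distrib)
  also have "(\<Prod>j<n. if j = i then x j ^ d else 1) = x i ^ d"
    using assms by (subst prod.delta) auto
  finally show ?thesis by (simp only: prod_power_distrib)
qed

theorem lemma4p3:
  fixes m k n :: nat
  assumes "m \<ge> 1" and "k \<ge> 2" and "n \<ge> k - 1"
  shows "lin_indep_family (Wpoly m n) (idx m k n)"
  unfolding lin_indep_family_def
proof (intro allI impI)
  fix S and c :: "nat \<times> (nat \<Rightarrow> nat) \<Rightarrow> real"
  assume finS: "finite S" and Ssub: "S \<subseteq> idx m k n"
    and zero: "\<forall>x. (\<Sum>t\<in>S. c t * Wpoly m n t x) = 0"
  define \<epsilon> where "\<epsilon> \<alpha> j = m + (m + 1) * snd (fst \<alpha>) j + (if j = snd \<alpha> then fst (fst \<alpha>) else 0)"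
    for \<alpha> :: "(nat \<times> (nat \<Rightarrow> nat)) \<times> nat" and j
  define A where "A = S \<times> {..<n}"
  have finA: "finite A" using finS A_def by simp
  have zA: "(\<Sum>\<alpha>\<in>A. c (fst \<alpha>) * (\<Prod>j<n. x j ^ \<epsilon> \<alpha> j)) = 0" for x
  proof -
    have "(\<Sum>\<alpha>\<in>A. c (fst \<alpha>) * (\<Prod>j<n. x j ^ \<epsilon> \<alpha> j))
        = (\<Sum>t\<in>S. \<Sum>i<n. c t * (\<Prod>j<n. x j ^ \<epsilon> (t, i) j))"
      unfolding A_def by (simp add: sum.cartesian_product split_def)
    also have "\<dots> = (\<Sum>t\<in>S. c t * Wpoly m n t x)"
    proof (intro sum.cong refl)
      fix t assume "t \<in> S"
      have "(\<Sum>i<n. c t * (\<Prod>j<n. x j ^ \<epsilon> (t, i) j))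
          = (\<Sum>i<n. c t * ((\<Prod>j<n. x j) ^ m * (\<Prod>j<n. x j ^ snd t j) ^ (m + 1) * x i ^ fst t))"
        apply (intro sum.cong refl)
        subgoal for i using Wpoly_expand[where i=i and n=n and m=m and l="snd t" and d="fst t" and x=x] unfolding \<epsilon>_def fst_conv snd_conv by simp
        done
      also have "\<dots> = c t * Wpoly m n t x"
        unfolding Wpoly_def by (simp only: sum_distrib_left)
      finally show "(\<Sum>i<n. c t * (\<Prod>j<n. x j ^ \<epsilon> (t, i) j)) = c t * Wpoly m n t x" .
    qed
    finally show ?thesis using zero by simp
  qed
  have key: "\<forall>l0. (d0, l0) \<in> S \<longrightarrow> c (d0, l0) = 0" for d0
  proof (induction d0 rule: less_induct)
    case (less d0)
    show ?case
    proof (intro allI impI)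
      fix l0 assume inS: "(d0, l0) \<in> S"
      then have l0z: "\<forall>i\<ge>n. l0 i = 0" and l0s: "d0 + (m + 1) * (\<Sum>i<n. l0 i) = (m + 1) * (k - 1) - 1"
        using Ssub by (auto simp: idx_def)
      obtain i0 where i0: "i0 < n" "l0 i0 = 0"
      proof (rule ccontr)
        assume "\<not> thesis"
        then have "\<forall>i<n. 1 \<le> l0 i" using that by (metis less_one not_less)
        then have "(\<Sum>i<n. (1::nat)) \<le> (\<Sum>i<n. l0 i)" by (intro sum_mono) auto
        then have "n \<le> (\<Sum>i<n. l0 i)" by simp
        then have "(m + 1) * n \<le> (m + 1) * (\<Sum>i<n. l0 i)" by (rule mult_le_mono2)
        also have "\<dots> < (m + 1) * (k - 1)"
        proof -
          have "0 < (m + 1) * (k - 1)" using assms(2) by simp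
          then show ?thesis using l0s by linarith
        qed
        also have "\<dots> \<le> (m + 1) * n" using assms(3) by (rule mult_le_mono2)
        finally show False by simp
      qed
      define \<alpha>0 where "\<alpha>0 = ((d0, l0), i0)"
      have a0A: "\<alpha>0 \<in> A" using inS i0 by (simp add: \<alpha>0_def A_def)
      define G where "G = {\<alpha>\<in>A. \<forall>j<n. \<epsilon> \<alpha> j = \<epsilon> \<alpha>0 j}"
      have sG: "(\<Sum>\<alpha>\<in>G. c (fst \<alpha>)) = 0"
        unfolding G_def by (rule multi_zero[OF finA zA a0A])
      have others: "c (fst \<alpha>) = 0" if "\<alpha> \<in> G" "\<alpha> \<noteq> \<alpha>0" for \<alpha>
      proof -
        obtain d l i where al: "\<alpha> = ((d, l), i)" by (metis prod.collapse)
        have dlS: "(d, l) \<in> S" and iN: "i < n" using that(1) al by (auto simp: G_def A_def)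
        then have lz: "\<forall>i\<ge>n. l i = 0" and ls: "d + (m + 1) * (\<Sum>i<n. l i) = (m + 1) * (k - 1) - 1"
          using Ssub by (auto simp: idx_def)
        have eq: "\<And>j. j < n \<Longrightarrow> (m + 1) * l j + (if j = i then d else 0) = (m + 1) * l0 j + (if j = i0 then d0 else 0)"
          using that(1) al by (auto simp: G_def \<epsilon>_def \<alpha>0_def)
        have ii0: "i = i0"
        proof (rule ccontr)
          assume "i \<noteq> i0"
          then have "(m + 1) * l i + d = (m + 1) * l0 i" using eq[OF iN] by simp
          then have "d mod (m + 1) = 0"
            by (metis mod_mult_self2 mult.commute add.commute mod_mult_self1_is_0)
          moreover have "d mod (m + 1) = m" using mod_lemma[OF ls assms(2)] .
          ultimately show False using assms(1) by simp
        qed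
        have e0: "(m + 1) * l i0 + d = d0" using eq[OF i0(1)] ii0 i0(2) by simp
        show ?thesis
        proof (cases "d < d0")
          case True
          then show ?thesis using less.IH dlS al by auto
        next
          case False
          then have "d = d0" "l i0 = 0" using e0 by auto
          moreover have "l j = l0 j" for j
          proof (cases "j < n")
            case True
            show ?thesis
            proof (cases "j = i0")
              case True
              then show ?thesis using \<open>l i0 = 0\<close> i0(2) by simp
            next
              case False
              then have "(m + 1) * l j = (m + 1) * l0 j" using eq[OF \<open>j < n\<close>] ii0 by simp
              then show ?thesis by (metis mult_left_cancel zero_less_Suc Suc_eq_plus1 less_numeral_extra(3))
            qed
          next
            case False
            then show ?thesis using lz l0z by simp
          qed
          ultimately have "\<alpha> = \<alpha>0" using al ii0 \<alpha>0_def by auto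
          then show ?thesis using that(2) by simp
        qed
      qed
      have finG: "finite G" using finA G_def by simp
      have a0G: "\<alpha>0 \<in> G" using a0A G_def by simp
      have "(\<Sum>\<alpha>\<in>G. c (fst \<alpha>)) = c (fst \<alpha>0) + (\<Sum>\<alpha>\<in>G - {\<alpha>0}. c (fst \<alpha>))"
        using sum.remove[OF finG a0G] by simp
      also have "(\<Sum>\<alpha>\<in>G - {\<alpha>0}. c (fst \<alpha>)) = 0"
        using others by (intro sum.neutral) auto
      finally show "c (d0, l0) = 0" using sG \<alpha>0_def by simp
    qed
  qed
  show "\<forall>t\<in>S. c t = 0"
    using key by auto
qed

end
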